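(* For every positive integer $m$, let $\mathcal{G}^{r}_m$ be the set of all directed acyclic graphs on the labeled vertex set $[m]=\{1,\dots,m\}$ whose Markov equivalence class has exactly one element. Then $$2^{\frac{m(m-3)}{2}+1}\le |\mathcal{G}^{r}_m|\le m!\,2^{\frac{m(m-1)}{2}},$$ and in particular $\log|\mathcal{G}^{r}_m|\ge \left(\frac{m(m-3)}{2}+1\right)\log 2$.
   Context: Two DAGs on the same vertex set are Markov equivalent if they encode exactly the same conditional independence statements among the associated random variables (equivalently, they have the same skeleton and the same v-structures). The Markov equivalence class of $G$ is the set of DAGs Markov equivalent to $G$. *)

theory Defs
  imports Complex_Main
begin

definition is_dag :: "'a set \<Rightarrow> ('a \<times> 'a) set \<Rightarrow> bool" where
  "is_dag V E \<longleftrightarrow> E \<subseteq> V \<times> V \<and> acyclic E"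

definition adjacent :: "('a \<times> 'a) set \<Rightarrow> 'a \<Rightarrow> 'a \<Rightarrow> bool" where
  "adjacent E u v \<longleftrightarrow> (u, v) \<in> E \<or> (v, u) \<in> E"

definition is_path :: "('a \<times> 'a) set \<Rightarrow> 'a list \<Rightarrow> bool" where
  "is_path E p \<longleftrightarrow> p \<noteq> [] \<and> distinct p \<and> (\<forall>i. Suc i < length p \<longrightarrow> adjacent E (p ! i) (p ! Suc i))"

definition collider :: "('a \<times> 'a) set \<Rightarrow> 'a list \<Rightarrow> nat \<Rightarrow> bool" where
  "collider E p i \<longleftrightarrow> (p ! (i - 1), p ! i) \<in> E \<and> (p ! Suc i, p ! i) \<in> E"

definition blocked :: "('a \<times> 'a) set \<Rightarrow> 'a set \<Rightarrow> 'a list \<Rightarrow> bool" where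
  "blocked E Z p \<longleftrightarrow> (\<exists>i. 0 < i \<and> Suc i < length p \<and>
      ((\<not> collider E p i \<and> p ! i \<in> Z) \<or>
       (collider E p i \<and> (\<forall>w. (p ! i, w) \<in> E\<^sup>* \<longrightarrow> w \<notin> Z))))"

definition d_separated :: "('a \<times> 'a) set \<Rightarrow> 'a set \<Rightarrow> 'a set \<Rightarrow> 'a set \<Rightarrow> bool" where
  "d_separated E A B Z \<longleftrightarrow> (\<forall>p. is_path E p \<and> hd p \<in> A \<and> last p \<in> B \<longrightarrow> blocked E Z p)"

definition CI_statements :: "'a set \<Rightarrow> ('a \<times> 'a) set \<Rightarrow> ('a set \<times> 'a set \<times> 'a set) set" where
  "CI_statements V E = {(A, B, Z). A \<subseteq> V \<and> B \<subseteq> V \<and> Z \<subseteq> V \<and> A \<noteq> {} \<and> B \<noteq> {} \<and>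
      A \<inter> B = {} \<and> A \<inter> Z = {} \<and> B \<inter> Z = {} \<and> d_separated E A B Z}"

definition markov_equivalent :: "'a set \<Rightarrow> ('a \<times> 'a) set \<Rightarrow> ('a \<times> 'a) set \<Rightarrow> bool" where
  "markov_equivalent V E1 E2 \<longleftrightarrow> is_dag V E1 \<and> is_dag V E2 \<and> CI_statements V E1 = CI_statements V E2"

definition MEC :: "'a set \<Rightarrow> ('a \<times> 'a) set \<Rightarrow> ('a \<times> 'a) set set" where
  "MEC V E = {E'. markov_equivalent V E E'}"

definition G_r :: "nat \<Rightarrow> (nat \<times> nat) set set" where
  "G_r m = {E. is_dag {1..m} E \<and> card (MEC {1..m} E) = 1}"

end

theory Submission
  imports Defs "HOL-Library.FuncSet"
begin

lemma me_sym: "markov_equivalent V E E' \<Longrightarrow> markov_equivalent V E' E"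
  unfolding markov_equivalent_def by auto

lemma adj_sym: "adjacent E u v = adjacent E v u"
  unfolding adjacent_def by auto

lemma path2: assumes "adjacent E u v" "u \<noteq> v" shows "\<not> d_separated E {u} {v} Z"
proof -
  have "is_path E [u,v]" using assms unfolding is_path_def by (auto simp: less_Suc_eq)
  moreover have "\<not> blocked E Z [u,v]" unfolding blocked_def by auto
  ultimately show ?thesis unfolding d_separated_def by (metis insertI1 last.simps list.sel(1) list.discI)
qed

lemma not_sep3:
  assumes "adjacent E a z" "adjacent E z b" "distinct [a,z,b]" "\<not> ((a,z)\<in>E \<and> (b,z)\<in>E)" "z \<notin> Z"
  shows "\<not> d_separated E {a} {b} Z"
proof -
  have "is_path E [a,z,b]" using assms unfolding is_path_def
    by (auto simp: less_Suc_eq nth_Cons split: nat.splits)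
  moreover have "\<not> blocked E Z [a,z,b]" using assms unfolding blocked_def collider_def
    by (auto simp: less_Suc_eq)
  ultimately show ?thesis unfolding d_separated_def by force
qed

lemma fwd:
  assumes "is_path E p" "(p!0, p!1) \<in> E" "\<forall>i. 0<i \<and> i<b \<longrightarrow> \<not> collider E p i" "b < length p"
  shows "j < b \<Longrightarrow> (p!j, p!Suc j) \<in> E"
proof (induction j)
  case 0 then show ?case using assms by simp
next
  case (Suc j)
  then have h: "(p!j, p!Suc j) \<in> E" by simp
  have "\<not> collider E p (Suc j)" using assms Suc by auto
  with h have "(p!Suc (Suc j), p!Suc j) \<notin> E" unfolding collider_def by simp
  moreover have "adjacent E (p!Suc j) (p!Suc (Suc j))" using assms(1,4) Suc unfolding is_path_def by auto
  ultimately show ?case unfolding adjacent_def by auto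
qed

lemma reach:
  assumes "is_path E p" "(p!0, p!1) \<in> E" "\<forall>i. 0<i \<and> i<b \<longrightarrow> \<not> collider E p i" "b < length p"
  shows "j \<le> b \<Longrightarrow> (p!0, p!j) \<in> E\<^sup>*"
proof (induction j)
  case 0 then show ?case by simp
next
  case (Suc j)
  then have "(p!j, p!Suc j) \<in> E" using fwd[OF assms] by simp
  with Suc show ?case by (meson Suc_leD rtrancl.rtrancl_into_rtrancl)
qed

lemma sep:
  assumes ac: "acyclic E" and uv: "u \<noteq> v" and na: "\<not> adjacent E u v" and nr: "(u,v) \<notin> E\<^sup>*"
  shows "d_separated E {u} {v} {w. (w,u)\<in>E}"
  unfolding d_separated_def
proof (intro allI impI)
  fix p assume H: "is_path E p \<and> hd p \<in> {u} \<and> last p \<in> {v}"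
  then have pp: "is_path E p" and hp: "p!0 = u" and lp: "p!(length p - 1) = v"
    by (auto simp: is_path_def hd_conv_nth last_conv_nth)
  have ne: "p \<noteq> []" using pp is_path_def by auto
  have l2: "length p \<ge> 2"
  proof (rule ccontr)
    assume "\<not> length p \<ge> 2"
    then have "length p = 1" using ne by (cases p) (auto simp: Suc_le_eq)
    then show False using hp lp uv by simp
  qed
  have a01: "adjacent E (p!0) (p!1)" using pp l2 unfolding is_path_def by auto
  show "blocked E {w. (w,u)\<in>E} p"
  proof (cases "(p!1, u) \<in> E")
    case True
    have "length p \<noteq> 2"
    proof
      assume "length p = 2" then have "p!1 = v" using lp by simp
      then show False using True na unfolding adjacent_def by auto
    qed
    then have l3: "Suc 1 < length p" using l2 by auto
    have "(u,u) \<notin> E\<^sup>+" using ac by (simp add: acyclic_def)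
    have "(u, p!1) \<notin> E"
    proof
      assume "(u, p!1) \<in> E"
      then have "(u,u) \<in> E\<^sup>+" by (rule trancl_into_trancl2[OF _ r_into_trancl[OF True]])
      then show False using \<open>(u,u) \<notin> E\<^sup>+\<close> by simp
    qed
    then have "\<not> collider E p 1" unfolding collider_def using hp by simp
    then show ?thesis unfolding blocked_def using l3 True by (intro exI[of _ 1]) auto
  next
    case False
    then have f01: "(p!0, p!1) \<in> E" using a01 hp unfolding adjacent_def by auto
    show ?thesis
    proof (cases "\<exists>i. 0<i \<and> Suc i < length p \<and> collider E p i")
      case False
      have mn: "\<forall>i. 0<i \<and> i<length p - 1 \<longrightarrow> \<not> collider E p i"
      proof (intro allI impI)
        fix i assume "0<i \<and> i<length p - 1"
        then have "0 < i \<and> Suc i < length p" by auto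
        then show "\<not> collider E p i" using False by blast
      qed
      have "(p!0, p!(length p - 1)) \<in> E\<^sup>*"
        using reach[OF pp f01 mn, of "length p - 1"] l2 by auto
      then show ?thesis using hp lp nr by simp
    next
      case True
      define i0 where "i0 = (LEAST i. 0<i \<and> Suc i < length p \<and> collider E p i)"
      have i0: "0<i0 \<and> Suc i0 < length p \<and> collider E p i0"
        using LeastI_ex[OF True] i0_def by simp
      have mn: "\<forall>i. 0<i \<and> i<i0 \<longrightarrow> \<not> collider E p i"
        
      proof (intro allI impI)
        fix i assume a: "0<i \<and> i<i0"
        show "\<not> collider E p i"
        proof
          assume c: "collider E p i"
          have "0<i \<and> Suc i < length p \<and> collider E p i" using a c i0 by auto
          then have "i0 \<le> i" unfolding i0_def by (rule Least_le)
          with a show False by simp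
        qed
      qed
      have r: "(u, p!i0) \<in> E\<^sup>*" using reach[OF pp f01 mn, of i0] i0 hp by auto
      have "\<forall>w. (p!i0, w) \<in> E\<^sup>* \<longrightarrow> w \<notin> {w. (w,u)\<in>E}"
      proof (intro allI impI)
        fix w assume "(p!i0, w) \<in> E\<^sup>*"
        show "w \<notin> {w. (w,u)\<in>E}"
        proof
          assume "w \<in> {w. (w,u)\<in>E}"
          then have "(p!i0, u) \<in> E\<^sup>+" using \<open>(p!i0, w) \<in> E\<^sup>*\<close> by auto
          with r have "(u,u) \<in> E\<^sup>+" by auto
          then show False using ac by (simp add: acyclic_def)
        qed
      qed
      then show ?thesis unfolding blocked_def using i0 by blast
    qed
  qed
qed

lemma acyc_irr: "acyclic E \<Longrightarrow> (a,a) \<notin> E"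
  unfolding acyclic_def by blast

lemma acyc_two: "acyclic E \<Longrightarrow> (a,b) \<in> E \<Longrightarrow> (b,a) \<notin> E"
  unfolding acyclic_def by (meson r_into_trancl trancl_into_trancl2)

lemma acyc_rt: assumes "acyclic E" "u \<noteq> v" "(u,v) \<in> E\<^sup>*" "(v,u) \<in> E\<^sup>*" shows False
proof -
  have "(u,v) \<in> E\<^sup>+" using assms(2,3) by (simp add: rtrancl_eq_or_trancl)
  then have "(u,u) \<in> E\<^sup>+" using assms(4) by simp
  then show False using assms(1) unfolding acyclic_def by blast
qed

lemma CI_mem:
  assumes "is_dag V E" "u \<in> V" "v \<in> V" "u \<noteq> v" "\<not> adjacent E u v" "(u,v) \<notin> E\<^sup>*"
  shows "({u},{v},{w. (w,u)\<in>E}) \<in> CI_statements V E"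
proof -
  have ac: "acyclic E" and sub: "E \<subseteq> V \<times> V" using assms(1) unfolding is_dag_def by auto
  have "d_separated E {u} {v} {w. (w,u)\<in>E}" using sep[OF ac assms(4-6)] .
  moreover have "{w. (w,u)\<in>E} \<subseteq> V" using sub by auto
  moreover have "u \<notin> {w. (w,u)\<in>E}" using acyc_irr[OF ac] by auto
  moreover have "v \<notin> {w. (w,u)\<in>E}" using assms(5) unfolding adjacent_def by auto
  ultimately show ?thesis unfolding CI_statements_def using assms(2-4) by simp
qed

lemma skel:
  assumes me: "markov_equivalent V E E'" and ad: "adjacent E u v"
  shows "adjacent E' u v"
proof (rule ccontr)
  assume na: "\<not> adjacent E' u v"
  have d: "is_dag V E" "is_dag V E'" and ci: "CI_statements V E' = CI_statements V E"
    using me unfolding markov_equivalent_def by auto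
  have ac: "acyclic E" "acyclic E'" and sub: "E \<subseteq> V \<times> V" using d unfolding is_dag_def by auto
  have uv: "u \<in> V" "v \<in> V" "u \<noteq> v" using ad sub acyc_irr[OF ac(1)] unfolding adjacent_def by auto
  show False
  proof (cases "(u,v) \<in> E'\<^sup>*")
    case False
    have "({u},{v},{w. (w,u)\<in>E'}) \<in> CI_statements V E" using CI_mem[OF d(2) uv na False] ci by simp
    then have "d_separated E {u} {v} {w. (w,u)\<in>E'}" unfolding CI_statements_def by simp
    then show False using path2[OF ad uv(3)] by blast
  next
    case True
    then have F: "(v,u) \<notin> E'\<^sup>*" using acyc_rt[OF ac(2) uv(3)] by blast
    have na': "\<not> adjacent E' v u" using na adj_sym by metis
    have "({v},{u},{w. (w,v)\<in>E'}) \<in> CI_statements V E" using CI_mem[OF d(2) uv(2,1) _ na' F] uv ci by simp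
    then have "d_separated E {v} {u} {w. (w,v)\<in>E'}" unfolding CI_statements_def by simp
    then show False using path2[of E v u] ad adj_sym uv(3) by metis
  qed
qed

lemma vstruct:
  assumes me: "markov_equivalent V E E'" and xz: "(x,z) \<in> E" and yz: "(y,z) \<in> E"
    and xy: "x \<noteq> y" and na: "\<not> adjacent E x y"
  shows "(x,z) \<in> E'"
proof (rule ccontr)
  assume nx: "(x,z) \<notin> E'"
  have d: "is_dag V E" "is_dag V E'" and ci: "CI_statements V E' = CI_statements V E"
    using me unfolding markov_equivalent_def by auto
  have ac: "acyclic E" "acyclic E'" and sub: "E \<subseteq> V \<times> V" using d unfolding is_dag_def by auto
  have V: "x \<in> V" "y \<in> V" using xz yz sub by auto
  have "adjacent E x z" "adjacent E y z" using xz yz unfolding adjacent_def by auto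
  then have a1: "adjacent E' x z" "adjacent E' y z" using skel[OF me] by auto
  have a2: "adjacent E' z y" "adjacent E' z x" using a1 unfolding adjacent_def by auto
  have na': "\<not> adjacent E' x y" using skel[OF me_sym[OF me], of x y] na by blast
  have zx: "z \<noteq> x" "z \<noteq> y" using xz yz acyc_irr[OF ac(1)] by auto
  have zn: "(z,x) \<notin> E" "(z,y) \<notin> E" using acyc_two[OF ac(1)] xz yz by auto
  show False
  proof (cases "(x,y) \<in> E\<^sup>*")
    case False
    have "({x},{y},{w. (w,x)\<in>E}) \<in> CI_statements V E'" using CI_mem[OF d(1) V xy na False] ci by simp
    then have "d_separated E' {x} {y} {w. (w,x)\<in>E}" unfolding CI_statements_def by simp
    moreover have "\<not> d_separated E' {x} {y} {w. (w,x)\<in>E}"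
    proof (rule not_sep3)
      show "adjacent E' x z" by (rule a1(1))
      show "adjacent E' z y" by (rule a2(1))
      show "distinct [x,z,y]" using zx xy by auto
      show "\<not> ((x,z)\<in>E' \<and> (y,z)\<in>E')" using nx by simp
      show "z \<notin> {w. (w,x)\<in>E}" using zn by simp
    qed
    ultimately show False by blast
  next
    case True
    then have F: "(y,x) \<notin> E\<^sup>*" using acyc_rt[OF ac(1) xy] by blast
    have na2: "\<not> adjacent E y x" using na adj_sym by metis
    have "({y},{x},{w. (w,y)\<in>E}) \<in> CI_statements V E'" using CI_mem[OF d(1) V(2,1) _ na2 F] xy ci by simp
    then have "d_separated E' {y} {x} {w. (w,y)\<in>E}" unfolding CI_statements_def by simp
    moreover have "\<not> d_separated E' {y} {x} {w. (w,y)\<in>E}"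
    proof (rule not_sep3)
      show "adjacent E' y z" by (rule a1(2))
      show "adjacent E' z x" by (rule a2(2))
      show "distinct [y,z,x]" using zx xy by auto
      show "\<not> ((y,z)\<in>E' \<and> (x,z)\<in>E')" using nx by simp
      show "z \<notin> {w. (w,y)\<in>E}" using zn by simp
    qed
    ultimately show False by blast
  qed
qed

definition good :: "(nat \<times> nat) set \<Rightarrow> bool" where
  "good E \<longleftrightarrow> (\<forall>s k. (s,k) \<in> E \<longrightarrow>
     ((\<exists>t. (t,k) \<in> E \<and> t \<noteq> s \<and> \<not> adjacent E s t) \<or>
      (\<exists>r. (r,s) \<in> E \<and> (r,k) \<notin> E) \<or>
      (\<exists>u. (s,u) \<in> E \<and> (u,k) \<in> E)))"

lemma meas_lt: "(b::nat) < c \<Longrightarrow> b*b + (b - a) < c*c + d"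
proof -
  assume "b < c"
  then have "Suc b * Suc b \<le> c * c" using mult_le_mono by (metis Suc_leI)
  then show ?thesis by simp
qed

lemma alone:
  assumes me: "markov_equivalent V E E'" and lt: "\<forall>(i,j)\<in>E. i < j" and g: "good E"
  shows "E' = E"
proof -
  have d: "is_dag V E" "is_dag V E'" using me unfolding markov_equivalent_def by auto
  have ac: "acyclic E" "acyclic E'" using d unfolding is_dag_def by auto
  have key: "\<forall>s k. (s,k) \<in> E \<longrightarrow> k*k + (k-s) = n \<longrightarrow> (s,k) \<in> E'" for n
  proof (induction n rule: less_induct)
    case (less n)
    show ?case
    proof (intro allI impI)
      fix s k assume sk: "(s,k) \<in> E" and mu: "k*k + (k-s) = n"
      have slk: "s < k" using lt sk by auto
      have IH: "\<And>a b. (a,b) \<in> E \<Longrightarrow> b*b + (b-a) < n \<Longrightarrow> (a,b) \<in> E'" using less by blast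
      have "adjacent E s k" using sk unfolding adjacent_def by simp
      then have adj: "(s,k) \<in> E' \<or> (k,s) \<in> E'" using skel[OF me] unfolding adjacent_def by blast
      from g sk consider (V) t where "(t,k) \<in> E" "t \<noteq> s" "\<not> adjacent E s t"
        | (R1) r where "(r,s) \<in> E" "(r,k) \<notin> E"
        | (R2) u where "(s,u) \<in> E" "(u,k) \<in> E"
        unfolding good_def by blast
      then show "(s,k) \<in> E'"
      proof cases
        case V
        then show ?thesis using vstruct[OF me sk V(1)] by blast
      next
        case R1
        have rls: "r < s" using lt R1(1) by auto
        have rs: "(r,s) \<in> E'" using IH[OF R1(1)] meas_lt[OF slk] mu by blast
        show ?thesis
        proof (rule ccontr)
          assume "(s,k) \<notin> E'"
          then have ks: "(k,s) \<in> E'" using adj by blast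
          have na: "\<not> adjacent E' k r"
          proof
            assume "adjacent E' k r"
            then have "adjacent E k r" using skel[OF me_sym[OF me]] by blast
            then have "(k,r) \<in> E" using R1(2) unfolding adjacent_def by blast
            then show False using lt rls slk by auto
          qed
          have "(k,s) \<in> E" using vstruct[OF me_sym[OF me] ks rs _ na] rls slk by simp
          then show False using lt slk by auto
        qed
      next
        case R2
        have slu: "s < u" "u < k" using lt R2 by auto
        have su: "(s,u) \<in> E'" using IH[OF R2(1)] meas_lt[OF slu(2)] mu by blast
        have uk: "(u,k) \<in> E'" using IH[OF R2(2)] slu mu by simp
        show ?thesis
        proof (rule ccontr)
          assume "(s,k) \<notin> E'"
          then have ks: "(k,s) \<in> E'" using adj by blast
          have "(s,s) \<in> E'\<^sup>+" using su uk ks by (meson r_into_trancl trancl_into_trancl)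
          then show False using ac(2) unfolding acyclic_def by blast
        qed
      qed
    qed
  qed
  have sub1: "E \<subseteq> E'"
  proof clarify
    fix a b assume "(a,b) \<in> E"
    then show "(a,b) \<in> E'" using key[of "b*b+(b-a)"] by blast
  qed
  have sub2: "E' \<subseteq> E"
  proof
    fix e assume e: "e \<in> E'"
    obtain a b where ab: "e = (a,b)" by (cases e)
    have "adjacent E' a b" using e ab unfolding adjacent_def by simp
    then have "adjacent E a b" using skel[OF me_sym[OF me]] by blast
    moreover have "(b,a) \<notin> E" using sub1 acyc_two[OF ac(2)] e ab by blast
    ultimately show "e \<in> E" using ab unfolding adjacent_def by blast
  qed
  show ?thesis using sub1 sub2 by blast
qed

lemma MEC_single:
  assumes "is_dag V E" "\<forall>(i,j)\<in>E. i < j" "good E"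
  shows "MEC V E = {E}"
proof -
  have "markov_equivalent V E E" using assms(1) unfolding markov_equivalent_def by simp
  moreover have "\<And>E'. markov_equivalent V E E' \<Longrightarrow> E' = E" using alone assms(2,3) by blast
  ultimately show ?thesis unfolding MEC_def by blast
qed

definition Pa :: "(nat \<times> nat) set \<Rightarrow> nat \<Rightarrow> nat set" where
  "Pa E k = {r. (r,k) \<in> E}"

definition par :: "(nat \<times> nat) set \<Rightarrow> nat \<Rightarrow> nat set \<Rightarrow> nat set" where
  "par E k T = (if T = Pa E (k-1) then {} else insert (k-1) T)"

fun build :: "nat \<Rightarrow> (nat \<Rightarrow> nat set) \<Rightarrow> (nat \<times> nat) set" where
  "build 0 f = {}"
| "build (Suc n) f = build n f \<union> (\<lambda>s. (s, Suc n)) ` par (build n f) (Suc n) (f (Suc n))"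

definition adm :: "nat \<Rightarrow> (nat \<Rightarrow> nat set) \<Rightarrow> bool" where
  "adm n f \<longleftrightarrow> (\<forall>k\<in>{1..n}. f k \<subseteq> {1..k-2})"

lemma adm_Suc: "adm (Suc n) f \<Longrightarrow> adm n f"
  unfolding adm_def by auto

lemma adm_top: "adm (Suc n) f \<Longrightarrow> f (Suc n) \<subseteq> {1..n-1}"
proof -
  assume a: "adm (Suc n) f"
  have "Suc n \<in> {1..Suc n}" by simp
  then have "f (Suc n) \<subseteq> {1..Suc n - 2}" using a unfolding adm_def by blast
  moreover have "Suc n - 2 = n - 1" by simp
  ultimately show ?thesis by simp
qed

lemma bnd: "adm n f \<Longrightarrow> build n f \<subseteq> {(i,j). 1 \<le> i \<and> i < j \<and> j \<le> n}"
proof (induction n)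
  case 0 then show ?case by simp
next
  case (Suc n)
  have IH: "build n f \<subseteq> {(i,j). 1 \<le> i \<and> i < j \<and> j \<le> n}" using Suc adm_Suc by blast
  have T: "f (Suc n) \<subseteq> {1..n-1}" using adm_top[OF Suc.prems] .
  have "\<And>s. s \<in> par (build n f) (Suc n) (f (Suc n)) \<Longrightarrow> 1 \<le> s \<and> s \<le> n"
  proof -
    fix s assume s: "s \<in> par (build n f) (Suc n) (f (Suc n))"
    show "1 \<le> s \<and> s \<le> n"
    proof (cases "n = 0")
      case True
      then have "f (Suc n) = {}" using T by auto
      moreover have "Pa (build n f) 0 = {}" using IH unfolding Pa_def by auto
      ultimately show ?thesis using s True unfolding par_def by simp
    next
      case False
      have sub: "\<forall>x\<in>f (Suc n). 1 \<le> x \<and> x \<le> n" using T by fastforce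
      then show ?thesis using s False unfolding par_def by (auto split: if_splits)
    qed
  qed
  then show ?case using IH by (auto simp: less_Suc_eq_le)
qed

lemma lt_build: "adm n f \<Longrightarrow> \<forall>(i,j)\<in>build n f. i < j"
  using bnd by fastforce

lemma dag_build: "adm n f \<Longrightarrow> is_dag {1..n} (build n f)"
proof -
  assume a: "adm n f"
  have "build n f \<subseteq> less_than" using bnd[OF a] by auto
  then have "acyclic (build n f)" using acyclic_subset wf_acyclic wf_less_than by blast
  moreover have "build n f \<subseteq> {1..n} \<times> {1..n}" using bnd[OF a] by auto
  ultimately show ?thesis unfolding is_dag_def by simp
qed

lemma good_build: "adm n f \<Longrightarrow> good (build n f)"
proof (induction n)
  case 0 then show ?case unfolding good_def by simp
next
  case (Suc n)
  define E where "E = build n f"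
  define T where "T = f (Suc n)"
  define P where "P = par E (Suc n) T"
  define E2 where "E2 = E \<union> (\<lambda>s. (s, Suc n)) ` P"
  have aE: "adm n f" using Suc.prems adm_Suc by blast
  have gE: "good E" using Suc.IH aE E_def by blast
  have bE: "E \<subseteq> {(i,j). 1 \<le> i \<and> i < j \<and> j \<le> n}" using bnd[OF aE] E_def by simp
  have TT: "T \<subseteq> {1..n-1}" using adm_top[OF Suc.prems] T_def by simp
  have E2b: "build (Suc n) f = E2" unfolding E2_def P_def E_def T_def by simp
  have inE2: "\<And>a b. (a,b) \<in> E2 \<longleftrightarrow> (a,b) \<in> E \<or> (b = Suc n \<and> a \<in> P)"
    unfolding E2_def by auto
  have Enot: "\<And>a b. (a,b) \<in> E \<Longrightarrow> 1 \<le> a \<and> a < b \<and> b \<le> n" using bE by auto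
  have "good E2"
    unfolding good_def
  proof (intro allI impI)
    fix s k assume sk: "(s,k) \<in> E2"
    show "(\<exists>t. (t,k) \<in> E2 \<and> t \<noteq> s \<and> \<not> adjacent E2 s t) \<or>
      (\<exists>r. (r,s) \<in> E2 \<and> (r,k) \<notin> E2) \<or>
      (\<exists>u. (s,u) \<in> E2 \<and> (u,k) \<in> E2)"
    proof (cases "(s,k) \<in> E")
      case True
      have kn: "k \<le> n" "s < k" using Enot[OF True] by auto
      from gE True consider (V) t where "(t,k) \<in> E" "t \<noteq> s" "\<not> adjacent E s t"
        | (R1) r where "(r,s) \<in> E" "(r,k) \<notin> E"
        | (R2) u where "(s,u) \<in> E" "(u,k) \<in> E"
        unfolding good_def by blast
      then show ?thesis
      proof cases
        case V
        have "t < k" using Enot[OF V(1)] by simp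
        then have "\<not> adjacent E2 s t" using V(3) kn unfolding adjacent_def inE2 by auto
        then show ?thesis using V inE2 by blast
      next
        case R1
        have "(r,k) \<notin> E2" using R1(2) kn unfolding inE2 by auto
        then show ?thesis using R1 inE2 by blast
      next
        case R2
        then show ?thesis using inE2 by blast
      qed
    next
      case False
      then have k: "k = Suc n" and sP: "s \<in> P" using sk inE2 by auto
      have PT: "T \<noteq> Pa E n" "P = insert n T" using sP unfolding P_def par_def by (auto split: if_splits)
      have n1: "n \<ge> 1"
      proof (rule ccontr)
        assume "\<not> n \<ge> 1"
        then have "n = 0" by simp
        then have "T = {}" "Pa E n = {}" using TT bE unfolding Pa_def by auto
        then show False using PT by simp
      qed
      have Tn: "\<And>x. x \<in> T \<Longrightarrow> 1 \<le> x \<and> x < n" using TT n1 by fastforce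
      show ?thesis
      proof (cases "s = n")
        case True
        then obtain x where x: "(x \<in> T \<and> (x,n) \<notin> E) \<or> ((x,n) \<in> E \<and> x \<notin> T)"
          using PT(1) unfolding Pa_def by blast
        then show ?thesis
        proof
          assume a: "x \<in> T \<and> (x,n) \<notin> E"
          have xn: "x < n" using Tn a by blast
          have "(x,k) \<in> E2" using a k PT(2) inE2 by auto
          moreover have "\<not> adjacent E2 s x"
          proof -
            have "(n,x) \<notin> E" using Enot[of n x] xn by auto
            then have "(n,x) \<notin> E2" using inE2[of n x] xn by auto
            moreover have "(x,n) \<notin> E2" using a inE2[of x n] by auto
            ultimately show ?thesis using True unfolding adjacent_def by blast
          qed
          ultimately show ?thesis using xn True by blast
        next
          assume a: "(x,n) \<in> E \<and> x \<notin> T"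
          have xn: "x < n" using Enot a by blast
          have "(x,k) \<notin> E2"
          proof
            assume "(x,k) \<in> E2"
            then have "(x,k) \<in> E \<or> x \<in> P" using inE2 k by blast
            then show False using Enot[of x k] k a xn PT(2) by auto
          qed
          then show ?thesis using a True inE2 by blast
        qed
      next
        case sn: False
        then have sT: "s \<in> T" using sP PT(2) by simp
        have sl: "s < n" using Tn sT by blast
        show ?thesis
        proof (cases "(s,n) \<in> E")
          case True
          have "(n,k) \<in> E2" using k PT(2) inE2 by auto
          then show ?thesis using True inE2 by blast
        next
          case False
          have "(n,k) \<in> E2" using k PT(2) inE2 by auto
          moreover have "\<not> adjacent E2 s n"
          proof -
            have "(n,s) \<notin> E" using Enot[of n s] sl by auto
            then have "(n,s) \<notin> E2" using inE2[of n s] sl by auto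
            moreover have "(s,n) \<notin> E2" using False inE2[of s n] by auto
            ultimately show ?thesis unfolding adjacent_def by blast
          qed
          ultimately show ?thesis using sn by blast
        qed
      qed
    qed
  qed
  then show ?case using E2b by simp
qed

lemma restr: "adm (Suc n) f \<Longrightarrow> {e \<in> build (Suc n) f. snd e \<le> n} = build n f"
proof -
  assume a: "adm (Suc n) f"
  have "build n f \<subseteq> {(i,j). 1 \<le> i \<and> i < j \<and> j \<le> n}" using bnd adm_Suc[OF a] by blast
  then show ?thesis by auto
qed

lemma newp: "adm (Suc n) f \<Longrightarrow> {s. (s, Suc n) \<in> build (Suc n) f} = par (build n f) (Suc n) (f (Suc n))"
proof -
  assume a: "adm (Suc n) f"
  have "build n f \<subseteq> {(i,j). 1 \<le> i \<and> i < j \<and> j \<le> n}" using bnd adm_Suc[OF a] by blast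
  then show ?thesis by auto
qed

lemma par_inj: "n \<notin> T \<Longrightarrow> n \<notin> T' \<Longrightarrow> par E (Suc n) T = par E (Suc n) T' \<Longrightarrow> T = T'"
  unfolding par_def by (auto split: if_splits simp: insert_ident)

lemma inj_build: "adm n f \<Longrightarrow> adm n g \<Longrightarrow> build n f = build n g \<Longrightarrow> \<forall>k\<in>{1..n}. f k = g k"
proof (induction n)
  case 0 then show ?case by simp
next
  case (Suc n)
  have b: "build n f = build n g" using restr[OF Suc.prems(1)] restr[OF Suc.prems(2)] Suc.prems(3) by metis
  then have IH: "\<forall>k\<in>{1..n}. f k = g k" using Suc.IH adm_Suc Suc.prems by blast
  have "par (build n f) (Suc n) (f (Suc n)) = par (build n f) (Suc n) (g (Suc n))"
    using newp[OF Suc.prems(1)] newp[OF Suc.prems(2)] Suc.prems(3) b by metis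
  moreover have "n \<notin> f (Suc n)"
  proof
    assume "n \<in> f (Suc n)"
    then have "n \<in> {1..n-1}" using adm_top[OF Suc.prems(1)] by blast
    then show False by auto
  qed
  moreover have "n \<notin> g (Suc n)"
  proof
    assume "n \<in> g (Suc n)"
    then have "n \<in> {1..n-1}" using adm_top[OF Suc.prems(2)] by blast
    then show False by auto
  qed
  ultimately have "f (Suc n) = g (Suc n)" using par_inj by blast
  then show ?case using IH by (auto simp: le_Suc_eq)
qed

definition Dm :: "nat \<Rightarrow> (nat \<Rightarrow> nat set) set" where
  "Dm m = PiE {1..m} (\<lambda>k. Pow {1..k-2})"

lemma Dm_adm: "f \<in> Dm m \<Longrightarrow> adm m f"
  unfolding Dm_def adm_def by (auto simp: PiE_iff)

lemma inj_Dm: "inj_on (build m) (Dm m)"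
proof (rule inj_onI)
  fix f g assume f: "f \<in> Dm m" and g: "g \<in> Dm m" and e: "build m f = build m g"
  have "\<forall>k\<in>{1..m}. f k = g k" using inj_build[OF Dm_adm[OF f] Dm_adm[OF g] e] .
  then show "f = g" using PiE_ext f g unfolding Dm_def by metis
qed

lemma card_Dm: "card (Dm m) = 2 ^ (\<Sum>k\<in>{1..m}. k - 2)"
proof -
  have "card (Dm m) = (\<Prod>k\<in>{1..m}. card (Pow {1..k-2}))" unfolding Dm_def by (simp add: card_PiE)
  also have "\<dots> = (\<Prod>k\<in>{1..m}. 2 ^ (k - 2))" by (simp add: card_Pow)
  also have "\<dots> = 2 ^ (\<Sum>k\<in>{1..m}. k - 2)" by (simp add: power_sum)
  finally show ?thesis .
qed

lemma sum_k2: "2 * (\<Sum>k\<in>{1..m}. k - (2::nat)) = (m - 1) * (m - 2)"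
proof (induction m)
  case 0 then show ?case by simp
next
  case (Suc m)
  then show ?case
  proof (cases m)
    case 0 then show ?thesis by simp
  next
    case (Suc j)
    then show ?thesis using Suc.IH by (cases j) (auto simp: algebra_simps)
  qed
qed

lemma dag_fin: "finite V \<Longrightarrow> finite {E. is_dag V E}"
proof -
  assume "finite V"
  then have "finite (Pow (V \<times> V))" by simp
  moreover have "{E. is_dag V E} \<subseteq> Pow (V \<times> V)" unfolding is_dag_def by auto
  ultimately show ?thesis using finite_subset by blast
qed

lemma sink:
  assumes "finite V" "V \<noteq> {}" "is_dag V E"
  shows "\<exists>z\<in>V. \<forall>y. (z,y) \<notin> E"
proof -
  have sub: "E \<subseteq> V \<times> V" and ac: "acyclic E" using assms(3) unfolding is_dag_def by auto
  have "finite E" using finite_subset[OF sub] assms(1) by blast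
  then have w: "wf (E\<inverse>)" using finite_acyclic_wf_converse ac by blast
  obtain x where "x \<in> V" using assms(2) by blast
  then obtain z where z: "z \<in> V" "\<forall>y. (y,z) \<in> E\<inverse> \<longrightarrow> y \<notin> V"
    using w unfolding wf_eq_minimal by blast
  then have "\<forall>y. (z,y) \<notin> E" using sub by auto
  then show ?thesis using z(1) by blast
qed

lemma exp_step: "n + n * (n - 1) div 2 = Suc n * n div (2::nat)"
proof (cases n)
  case 0 then show ?thesis by simp
next
  case (Suc j)
  have "Suc n * n = n * (n - 1) + 2 * n" using Suc by (simp add: algebra_simps)
  then show ?thesis by simp
qed

lemma dag_count: "finite V \<Longrightarrow> card {E. is_dag V E} \<le> fact (card V) * 2 ^ (card V * (card V - 1) div 2)"
proof (induction "card V" arbitrary: V)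
  case 0
  then have "V = {}" by simp
  then have "{E. is_dag V E} = {{}}" unfolding is_dag_def by (auto simp: acyclic_def)
  then show ?case by simp
next
  case (Suc n V)
  have ne: "V \<noteq> {}" using Suc.hyps(2) by auto
  define F where "F = (\<lambda>v. (\<lambda>(S,E'). E' \<union> S \<times> {v}) ` (Pow (V - {v}) \<times> {E'. is_dag (V - {v}) E'}))"
  have cov: "{E. is_dag V E} \<subseteq> (\<Union>v\<in>V. F v)"
  proof
    fix E assume "E \<in> {E. is_dag V E}"
    then have d: "is_dag V E" by simp
    have sub: "E \<subseteq> V \<times> V" and ac: "acyclic E" using d unfolding is_dag_def by auto
    obtain z where z: "z \<in> V" "\<forall>y. (z,y) \<notin> E" using sink[OF Suc.prems ne d] by blast
    define S where "S = {w. (w,z) \<in> E}"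
    define E' where "E' = E \<inter> ((V - {z}) \<times> (V - {z}))"
    have "S \<subseteq> V - {z}" using sub acyc_irr[OF ac] unfolding S_def by auto
    moreover have "is_dag (V - {z}) E'" unfolding is_dag_def E'_def using acyclic_subset[OF ac] by auto
    moreover have "E = E' \<union> S \<times> {z}" unfolding E'_def S_def using sub z(2) by auto
    ultimately have "E \<in> F z" unfolding F_def by auto
    then show "E \<in> (\<Union>v\<in>V. F v)" using z(1) by blast
  qed
  have cardF: "card (F v) \<le> 2 ^ n * (fact n * 2 ^ (n * (n - 1) div 2))" if v: "v \<in> V" for v
  proof -
    have cv: "card (V - {v}) = n" using Suc.hyps(2) v by simp
    have fv: "finite (V - {v})" using Suc.prems by simp
    have "card (F v) \<le> card (Pow (V - {v}) \<times> {E'. is_dag (V - {v}) E'})"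
      unfolding F_def by (rule card_image_le) (use dag_fin[OF fv] fv in simp)
    also have "\<dots> = 2 ^ n * card {E'. is_dag (V - {v}) E'}"
      using fv cv by (simp add: card_cartesian_product card_Pow)
    also have "\<dots> \<le> 2 ^ n * (fact n * 2 ^ (n * (n - 1) div 2))"
      using Suc.hyps(1)[of "V - {v}"] cv fv by simp
    finally show ?thesis .
  qed
  have "card {E. is_dag V E} \<le> card (\<Union>v\<in>V. F v)"
  proof (rule card_mono)
    have "\<And>v. finite (F v)"
    proof -
      fix v
      have "finite (V - {v})" using Suc.prems by simp
      then show "finite (F v)" unfolding F_def using dag_fin[of "V - {v}"] by simp
    qed
    then show "finite (\<Union>v\<in>V. F v)" using Suc.prems by simp
  qed (rule cov)
  also have "\<dots> \<le> (\<Sum>v\<in>V. card (F v))" by (rule card_UN_le) (rule Suc.prems)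
  also have "\<dots> \<le> (\<Sum>v\<in>V. 2 ^ n * (fact n * 2 ^ (n * (n - 1) div 2)))" by (rule sum_mono) (rule cardF)
  also have "\<dots> = Suc n * (2 ^ n * (fact n * 2 ^ (n * (n - 1) div 2)))" using Suc.hyps(2) by simp
  also have "\<dots> = fact (Suc n) * 2 ^ (n + n * (n - 1) div 2)" by (simp add: power_add algebra_simps)
  also have "\<dots> = fact (Suc n) * 2 ^ (Suc n * n div 2)" by (simp only: exp_step)
  finally have "card {E. is_dag V E} \<le> fact (Suc n) * 2 ^ (Suc n * n div 2)" .
  moreover have "Suc n * n = card V * (card V - 1)" using Suc.hyps(2) by (metis diff_Suc_1)
  ultimately show ?case using Suc.hyps(2) by metis
qed

lemma even_mm1: "even (m * (m - (1::nat)))"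
  by (cases "even m") auto

theorem lemma1:
  fixes m :: nat
  assumes "m \<ge> 1"
  shows "2 powr (real m * (real m - 3) / 2 + 1) \<le> real (card (G_r m))
       \<and> real (card (G_r m)) \<le> real (fact m) * 2 powr (real m * (real m - 1) / 2)
       \<and> ln (real (card (G_r m))) \<ge> (real m * (real m - 3) / 2 + 1) * ln 2"
proof -
  define S where "S = (\<Sum>k\<in>{1..m}. k - (2::nat))"
  have Gsub: "G_r m \<subseteq> {E. is_dag {1..m} E}" unfolding G_r_def by auto
  have finG: "finite (G_r m)" using finite_subset[OF Gsub dag_fin[of "{1..m}"]] by simp
  have up: "card (G_r m) \<le> fact m * 2 ^ (m * (m - 1) div 2)"
    using card_mono[OF dag_fin[of "{1..m}"] Gsub] dag_count[of "{1..m}"] by simp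
  have img: "build m ` Dm m \<subseteq> G_r m"
  proof
    fix E assume "E \<in> build m ` Dm m"
    then obtain f where f: "f \<in> Dm m" "E = build m f" by blast
    have a: "adm m f" using Dm_adm[OF f(1)] .
    have "MEC {1..m} E = {E}" using MEC_single[OF dag_build[OF a] lt_build[OF a] good_build[OF a]] f(2) by simp
    then show "E \<in> G_r m" unfolding G_r_def using dag_build[OF a] f(2) by simp
  qed
  have low: "2 ^ S \<le> card (G_r m)"
  proof -
    have "2 ^ S = card (Dm m)" using card_Dm S_def by simp
    also have "\<dots> = card (build m ` Dm m)" using card_image[OF inj_Dm] by simp
    also have "\<dots> \<le> card (G_r m)" by (rule card_mono[OF finG img])
    finally show ?thesis .
  qed
  have Sr: "real m * (real m - 3) / 2 + 1 = real S"
  proof -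
    have "2 * S = (m - 1) * (m - 2)" using sum_k2 S_def by simp
    then have "2 * real S = real (m - 1) * real (m - 2)" by (metis of_nat_mult of_nat_numeral)
    moreover have "real (m - 1) * real (m - 2) = (real m - 1) * (real m - 2)"
    proof (cases "m = 1")
      case True then show ?thesis by simp
    next
      case False then have "m \<ge> 2" using assms by simp
      then show ?thesis by (simp add: of_nat_diff)
    qed
    ultimately have "2 * real S = real m * real m - 3 * real m + 2" by (simp add: algebra_simps)
    then show ?thesis by (simp add: field_simps)
  qed
  have Ur: "real m * (real m - 1) / 2 = real (m * (m - 1) div 2)"
  proof -
    have "2 * (m * (m - 1) div 2) = m * (m - 1)" using even_mm1 by simp
    then have "2 * real (m * (m - 1) div 2) = real m * real (m - 1)" by (metis of_nat_mult of_nat_numeral)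
    then show ?thesis using assms by (simp add: of_nat_diff)
  qed
  have p1: "2 powr (real m * (real m - 3) / 2 + 1) = 2 ^ S" using Sr by (simp add: powr_realpow)
  have p2: "2 powr (real m * (real m - 1) / 2) = 2 ^ (m * (m - 1) div 2)" using Ur by (simp add: powr_realpow)
  have A: "2 powr (real m * (real m - 3) / 2 + 1) \<le> real (card (G_r m))"
    using p1 low by (metis of_nat_le_iff of_nat_numeral of_nat_power)
  have B: "real (card (G_r m)) \<le> real (fact m) * 2 powr (real m * (real m - 1) / 2)"
    using p2 up by (metis of_nat_le_iff of_nat_mult of_nat_numeral of_nat_power)
  have pos: "0 < 2 powr (real m * (real m - 3) / 2 + 1)" by simp
  have "ln (2 powr (real m * (real m - 3) / 2 + 1)) \<le> ln (real (card (G_r m)))"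
  proof (subst ln_le_cancel_iff)
    show "0 < 2 powr (real m * (real m - 3) / 2 + 1)" by (rule pos)
    show "0 < real (card (G_r m))" using A pos by linarith
  qed (rule A)
  then have C: "ln (real (card (G_r m))) \<ge> (real m * (real m - 3) / 2 + 1) * ln 2"
    by (simp add: ln_powr)
  show ?thesis using A B C by blast
qed

end
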